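(* Let $q$ be a prime power and $T\in\mathbb F_q[X,Y,Z]$ a reduced polynomial satisfying Property (a): $T(a,0,z)=T(0,b,z)=z$ for all $a,b,z\in\mathbb F_q$, and Property (b): $T(x,1,0)=x$ and $T(1,y,0)=y$ for all $x,y\in\mathbb F_q$. Then $$T(X,Y,Z)=Z+XYZ\,M_1(X,Y,Z)+M_2(X,Y),$$ with $M_1(X,Y,Z)=\sum_{i,j,k=0}^{q-2}b_{ijk}X^iY^jZ^k$ and $M_2(X,Y)=\sum_{i=1}^{q-1}\sum_{j=1}^{q-1}c_{ij}X^iY^j$, where for every $1\le j\le q-1$, $$\sum_{i=1}^{q-1}c_{ij}=\sum_{i=1}^{q-1}c_{ji}=\begin{cases}1&\text{if } j=1,\\0&\text{if } j>1.\end{cases}$$ Moreover $T(1,y,z)=y+z+yz\,M_1(1,y,z)$ for all $y,z\in\mathbb F_q$.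
   Context: A polynomial is reduced if its degree in each variable is less than $q$. *)

theory Defs
  imports Main
begin

text \<open>A polynomial in F[X,Y,Z] is represented by its coefficient function
  (i,j,k) maps to the coefficient of X^i Y^j Z^k.\<close>

definition reduced3 :: "nat \<Rightarrow> (nat \<Rightarrow> nat \<Rightarrow> nat \<Rightarrow> 'a::zero) \<Rightarrow> bool" where
  "reduced3 q t \<longleftrightarrow> (\<forall>i j k. t i j k \<noteq> 0 \<longrightarrow> i < q \<and> j < q \<and> k < q)"

definition eval3 :: "nat \<Rightarrow> (nat \<Rightarrow> nat \<Rightarrow> nat \<Rightarrow> 'a::comm_ring_1) \<Rightarrow> 'a \<Rightarrow> 'a \<Rightarrow> 'a \<Rightarrow> 'a" where
  "eval3 q t x y z = (\<Sum>i<q. \<Sum>j<q. \<Sum>k<q. t i j k * x ^ i * y ^ j * z ^ k)"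

end

theory Submission
  imports Defs "HOL-Computational_Algebra.Polynomial"
begin

lemma sum_if_P: "(\<Sum>k\<in>A. if P then f k else 0) = (if P then sum f A else 0)"
  by simp

lemma ev_y0: "q > 0 \<Longrightarrow> eval3 q T x 0 z = (\<Sum>i<q. \<Sum>k<q. T i 0 k * x^i * z^k)"
  unfolding eval3_def
  apply (subst (2) sum.swap)
  apply (simp add: power_0_left if_distrib if_distribR sum_if_P cong: if_cong)
  done

lemma ev_x0: "q > 0 \<Longrightarrow> eval3 q T 0 y z = (\<Sum>j<q. \<Sum>k<q. T 0 j k * y^j * z^k)"
  unfolding eval3_def
  by (simp add: power_0_left if_distrib if_distribR sum_if_P cong: if_cong)

lemma ev_z0: "q > 0 \<Longrightarrow> eval3 q T x y 0 = (\<Sum>i<q. \<Sum>j<q. T i j 0 * x^i * y^j)"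
  unfolding eval3_def
  by (simp add: power_0_left if_distrib if_distribR sum_if_P cong: if_cong)

lemma shift: "q > 0 \<Longrightarrow> (\<Sum>i<q. f i) = f 0 + (\<Sum>i<q-1. f (Suc i))"
  by (cases q) (auto simp del: sum.lessThan_Suc simp add: sum.lessThan_Suc_shift)

lemma sum_1n: "(\<Sum>i=1..n. f i) = (\<Sum>i<n. f (Suc i))"
  by (induction n) simp_all

lemma uni0:
  fixes a :: "nat \<Rightarrow> 'a::{finite,field}"
  assumes h: "\<forall>x::'a. (\<Sum>i<card (UNIV::'a set). a i * x^i) = 0" and i: "i < card (UNIV::'a set)"
  shows "a i = 0"
proof -
  define q where "q = card (UNIV::'a set)"
  define p where "p = (\<Sum>i<q. monom (a i) i)"
  have q0: "q > 0" unfolding q_def by (simp add: card_gt_0_iff)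
  have ev: "poly p x = (\<Sum>i<q. a i * x^i)" for x unfolding p_def by (simp add: poly_sum poly_monom)
  have co: "coeff p i = a i" using i unfolding p_def q_def by (simp add: coeff_sum coeff_monom)
  have dg: "degree p \<le> q - 1" unfolding p_def
    by (rule degree_sum_le) (auto intro: order_trans[OF degree_monom_le])
  show ?thesis
  proof (rule ccontr)
    assume "a i \<noteq> 0"
    then have "p \<noteq> 0" using co by auto
    then have "card {x. poly p x = 0} \<le> degree p" by (rule card_poly_roots_bound)
    moreover have "{x. poly p x = 0} = UNIV" using h ev q_def by auto
    ultimately show False using dg q0 q_def by simp
  qed
qed

lemma uni:
  fixes a b :: "nat \<Rightarrow> 'a::{finite,field}"
  assumes "\<forall>x. (\<Sum>i<card(UNIV::'a set). a i * x^i) = (\<Sum>i<card(UNIV::'a set). b i * x^i)"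
    "i < card (UNIV::'a set)"
  shows "a i = b i"
proof -
  have "\<forall>x::'a. (\<Sum>i<card(UNIV::'a set). (a i - b i) * x^i) = 0"
    using assms(1) by (simp add: left_diff_distrib sum_subtractf)
  from uni0[OF this assms(2)] show ?thesis by simp
qed

lemma bi:
  fixes a b :: "nat \<Rightarrow> nat \<Rightarrow> 'a::{finite,field}"
  assumes h: "\<forall>x z. (\<Sum>i<card(UNIV::'a set). \<Sum>k<card(UNIV::'a set). a i k * x^i * z^k)
                  = (\<Sum>i<card(UNIV::'a set). \<Sum>k<card(UNIV::'a set). b i k * x^i * z^k)"
    and i: "i < card (UNIV::'a set)" and k: "k < card (UNIV::'a set)"
  shows "a i k = b i k"
proof -
  let ?Q = "card(UNIV::'a set)"
  have "\<forall>z. (\<Sum>k<?Q. a i k * z^k) = (\<Sum>k<?Q. b i k * z^k)"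
  proof
    fix z :: 'a
    have e: "(\<Sum>i<?Q. (\<Sum>k<?Q. c i k * z^k) * x^i) = (\<Sum>i<?Q. \<Sum>k<?Q. c i k * x^i * z^k)"
      for c :: "nat\<Rightarrow>nat\<Rightarrow>'a" and x
      by (simp add: sum_distrib_right sum_distrib_left mult_ac)
    have "\<forall>x. (\<Sum>i<?Q. (\<Sum>k<?Q. a i k * z^k) * x^i) = (\<Sum>i<?Q. (\<Sum>k<?Q. b i k * z^k) * x^i)"
      using h e[of a] e[of b] by simp
    from uni[OF this i] show "(\<Sum>k<?Q. a i k * z^k) = (\<Sum>k<?Q. b i k * z^k)" .
  qed
  from uni[OF this k] show ?thesis .
qed

lemma Zsum:
  fixes x z :: "'a::comm_ring_1"
  assumes "q \<ge> 2"
  shows "(\<Sum>i<q. \<Sum>k<q. (if i=0 \<and> k=1 then 1 else 0) * x^i * z^k) = z"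
proof -
  have "(\<Sum>k<q. (if i=0 \<and> k=1 then 1 else 0) * x^i * z^k) = (if i = 0 then z else 0)" for i
    using assms by (cases "i = 0") (simp_all add: if_distrib if_distribR cong: if_cong)
  then show ?thesis using assms by simp
qed

lemma Xsum:
  fixes x :: "'a::comm_ring_1"
  assumes "q \<ge> 2"
  shows "(\<Sum>i<q. (if i=1 then 1 else 0) * x^i) = x"
  using assms by (simp add: if_distrib if_distribR cong: if_cong)

theorem lemma4p7:
  fixes T :: "nat \<Rightarrow> nat \<Rightarrow> nat \<Rightarrow> 'a::{finite,field}"
    and q :: nat
  defines "q \<equiv> card (UNIV :: 'a set)"
  assumes red: "reduced3 q T"
    and propa: "\<forall>a b z. eval3 q T a 0 z = z \<and> eval3 q T 0 b z = z"
    and propb: "\<forall>x y. eval3 q T x 1 0 = x \<and> eval3 q T 1 y 0 = y"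
  shows "\<exists>(b :: nat \<Rightarrow> nat \<Rightarrow> nat \<Rightarrow> 'a) (c :: nat \<Rightarrow> nat \<Rightarrow> 'a).
     (\<forall>i j k. T i j k =
         (if i = 0 \<and> j = 0 \<and> k = 1 then 1 else 0)
       + (if 1 \<le> i \<and> i \<le> q - 1 \<and> 1 \<le> j \<and> j \<le> q - 1 \<and> 1 \<le> k \<and> k \<le> q - 1
          then b (i - 1) (j - 1) (k - 1) else 0)
       + (if k = 0 \<and> 1 \<le> i \<and> i \<le> q - 1 \<and> 1 \<le> j \<and> j \<le> q - 1 then c i j else 0))
   \<and> (\<forall>j\<in>{1..q-1}.
        (\<Sum>i=1..q-1. c i j) = (if j = 1 then 1 else 0)
      \<and> (\<Sum>i=1..q-1. c j i) = (if j = 1 then 1 else 0))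
   \<and> (\<forall>y z. eval3 q T 1 y z =
        y + z + y * z * (\<Sum>i\<le>q-2. \<Sum>j\<le>q-2. \<Sum>k\<le>q-2. b i j k * 1 ^ i * y ^ j * z ^ k))"
proof -
  have "card {0::'a, 1} \<le> card (UNIV::'a set)" by (rule card_mono) auto
  then have q2: "q \<ge> 2" unfolding q_def by simp
  then have q0: "q > 0" by simp
  have redT: "T i j k \<noteq> 0 \<Longrightarrow> i < q \<and> j < q \<and> k < q" for i j k
    using red unfolding reduced3_def by blast
  note bi' = bi[where 'a='a, folded q_def]
  note uni' = uni[where 'a='a, folded q_def]
  have A1: "T i 0 k = (if i=0 \<and> k=1 then 1 else 0)" for i k
  proof (cases "i<q \<and> k<q")
    case True
    have "\<forall>x z. (\<Sum>i<q. \<Sum>k<q. T i 0 k * x^i * z^k)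
        = (\<Sum>i<q. \<Sum>k<q. (if i=0 \<and> k=1 then 1 else 0) * x^i * z^k)"
      proof (intro allI)
        fix x z :: 'a
        have "eval3 q T x 0 z = z" using propa by simp
        then show "(\<Sum>i<q. \<Sum>k<q. T i 0 k * x^i * z^k)
        = (\<Sum>i<q. \<Sum>k<q. (if i=0 \<and> k=1 then 1 else 0) * x^i * z^k)" unfolding ev_y0[OF q0] Zsum[OF q2] .
      qed
    from bi'[OF this] True show ?thesis by simp
  next
    case False then show ?thesis using redT[of i 0 k] q2 by auto
  qed
  have A2: "T 0 j k = (if j=0 \<and> k=1 then 1 else 0)" for j k
  proof (cases "j<q \<and> k<q")
    case True
    have "\<forall>x z. (\<Sum>j<q. \<Sum>k<q. T 0 j k * x^j * z^k)
        = (\<Sum>j<q. \<Sum>k<q. (if j=0 \<and> k=1 then 1 else 0) * x^j * z^k)"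
      proof (intro allI)
        fix x z :: 'a
        have "eval3 q T 0 x z = z" using propa by simp
        then show "(\<Sum>j<q. \<Sum>k<q. T 0 j k * x^j * z^k)
        = (\<Sum>j<q. \<Sum>k<q. (if j=0 \<and> k=1 then 1 else 0) * x^j * z^k)" unfolding ev_x0[OF q0] Zsum[OF q2] .
      qed
    from bi'[OF this] True show ?thesis by simp
  next
    case False then show ?thesis using redT[of 0 j k] q2 by auto
  qed
  have B1: "(\<Sum>j<q. T i j 0) = (if i=1 then 1 else 0)" if "i < q" for i
  proof -
    have "\<forall>x. (\<Sum>i<q. (\<Sum>j<q. T i j 0) * x^i) = (\<Sum>i<q. (if i=1 then 1 else 0) * x^i)"
    proof
      fix x :: 'a
      have "(\<Sum>i<q. (\<Sum>j<q. T i j 0) * x^i) = eval3 q T x 1 0"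
        using ev_z0[OF q0, of T x 1] by (simp add: sum_distrib_right)
      then show "(\<Sum>i<q. (\<Sum>j<q. T i j 0) * x^i) = (\<Sum>i<q. (if i=1 then 1 else 0) * x^i)"
        using propb Xsum[OF q2, of x] by simp
    qed
    from uni'[OF this that] show ?thesis .
  qed
  have B2: "(\<Sum>i<q. T i j 0) = (if j=1 then 1 else 0)" if "j < q" for j
  proof -
    have "\<forall>x. (\<Sum>j<q. (\<Sum>i<q. T i j 0) * x^j) = (\<Sum>j<q. (if j=1 then 1 else 0) * x^j)"
    proof
      fix x :: 'a
      have "(\<Sum>j<q. (\<Sum>i<q. T i j 0) * x^j) = (\<Sum>j<q. \<Sum>i<q. T i j 0 * x^j)"
        by (simp add: sum_distrib_right)
      also have "\<dots> = (\<Sum>i<q. \<Sum>j<q. T i j 0 * x^j)" by (rule sum.swap)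
      also have "\<dots> = eval3 q T 1 x 0" using ev_z0[OF q0, of T 1 x] by simp
      finally have "(\<Sum>j<q. (\<Sum>i<q. T i j 0) * x^j) = eval3 q T 1 x 0" .
      then show "(\<Sum>j<q. (\<Sum>i<q. T i j 0) * x^j) = (\<Sum>j<q. (if j=1 then 1 else 0) * x^j)"
        using propb Xsum[OF q2, of x] by simp
    qed
    from uni'[OF this that] show ?thesis .
  qed
  define b where "b = (\<lambda>i j k. T (Suc i) (Suc j) (Suc k))"
  define c where "c = (\<lambda>i j. T i j 0)"
  have C1: "\<forall>i j k. T i j k =
         (if i = 0 \<and> j = 0 \<and> k = 1 then 1 else 0)
       + (if 1 \<le> i \<and> i \<le> q - 1 \<and> 1 \<le> j \<and> j \<le> q - 1 \<and> 1 \<le> k \<and> k \<le> q - 1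
          then b (i - 1) (j - 1) (k - 1) else 0)
       + (if k = 0 \<and> 1 \<le> i \<and> i \<le> q - 1 \<and> 1 \<le> j \<and> j \<le> q - 1 then c i j else 0)"
  proof (intro allI)
    fix i j k
    show "T i j k =
         (if i = 0 \<and> j = 0 \<and> k = 1 then 1 else 0)
       + (if 1 \<le> i \<and> i \<le> q - 1 \<and> 1 \<le> j \<and> j \<le> q - 1 \<and> 1 \<le> k \<and> k \<le> q - 1
          then b (i - 1) (j - 1) (k - 1) else 0)
       + (if k = 0 \<and> 1 \<le> i \<and> i \<le> q - 1 \<and> 1 \<le> j \<and> j \<le> q - 1 then c i j else 0)"
    proof (cases "i = 0 \<or> j = 0")
      case True thus ?thesis using A1 A2 by auto
    next
      case False
      have r: "\<not> (i \<le> q-1 \<and> j \<le> q-1 \<and> k \<le> q-1) \<Longrightarrow> T i j k = 0"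
        using redT[of i j k] q0 by fastforce
      from False show ?thesis using r q0 unfolding b_def c_def
        by (cases "k = 0") auto
    qed
  qed
  have S1: "(\<Sum>i<q-1. T (Suc i) j 0) = (if j=1 then 1 else 0)" if "j < q" for j
    using B2[OF that] shift[OF q0, of "\<lambda>i. T i j 0"] A2[of j 0] by simp
  have S2: "(\<Sum>i<q-1. T j (Suc i) 0) = (if j=1 then 1 else 0)" if "j < q" for j
    using B1[OF that] shift[OF q0, of "\<lambda>i. T j i 0"] A1[of j 0] by simp
  have C2: "\<forall>j\<in>{1..q-1}.
        (\<Sum>i=1..q-1. c i j) = (if j = 1 then 1 else 0)
      \<and> (\<Sum>i=1..q-1. c j i) = (if j = 1 then 1 else 0)"
  proof
    fix j assume "j \<in> {1..q-1}"
    then have "j < q" using q0 by auto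
    then show "(\<Sum>i=1..q-1. c i j) = (if j = 1 then 1 else 0)
      \<and> (\<Sum>i=1..q-1. c j i) = (if j = 1 then 1 else 0)"
      using S1 S2 unfolding c_def sum_1n by simp
  qed
  have C3: "eval3 q T 1 y z =
        y + z + y * z * (\<Sum>i\<le>q-2. \<Sum>j\<le>q-2. \<Sum>k\<le>q-2. b i j k * 1 ^ i * y ^ j * z ^ k)" for y z
  proof -
    have AT: "{..q-2} = {..<q-1}" using q2 by auto
    have s1: "(\<Sum>j<q. \<Sum>k<q. T (Suc i) j k * y^j * z^k)
       = (\<Sum>j<q-1. \<Sum>k<q. T (Suc i) (Suc j) k * y^(Suc j) * z^k)" for i
      using shift[OF q0, of "\<lambda>j. \<Sum>k<q. T (Suc i) j k * y^j * z^k"] A1 by simp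
    have s2: "(\<Sum>k<q. T (Suc i) (Suc j) k * y^(Suc j) * z^k)
       = T (Suc i) (Suc j) 0 * y^(Suc j) + (\<Sum>k<q-1. T (Suc i) (Suc j) (Suc k) * y^(Suc j) * z^(Suc k))" for i j
      using shift[OF q0, of "\<lambda>k. T (Suc i) (Suc j) k * y^(Suc j) * z^k"] by simp
    have "eval3 q T 1 y z = (\<Sum>i<q. \<Sum>j<q. \<Sum>k<q. T i j k * y^j * z^k)"
      unfolding eval3_def by simp
    also have "\<dots> = (\<Sum>j<q. \<Sum>k<q. T 0 j k * y^j * z^k)
        + (\<Sum>i<q-1. \<Sum>j<q. \<Sum>k<q. T (Suc i) j k * y^j * z^k)"
      by (rule shift[OF q0])
    also have "(\<Sum>j<q. \<Sum>k<q. T 0 j k * y^j * z^k) = z"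
      using Zsum[OF q2, of y z] A2 by simp
    also have "(\<Sum>i<q-1. \<Sum>j<q. \<Sum>k<q. T (Suc i) j k * y^j * z^k)
       = (\<Sum>i<q-1. \<Sum>j<q-1. T (Suc i) (Suc j) 0 * y^(Suc j))
         + (\<Sum>i<q-1. \<Sum>j<q-1. \<Sum>k<q-1. T (Suc i) (Suc j) (Suc k) * y^(Suc j) * z^(Suc k))"
      by (simp only: s1 s2 sum.distrib)
    also have "(\<Sum>i<q-1. \<Sum>j<q-1. T (Suc i) (Suc j) 0 * y^(Suc j))
       = (\<Sum>j<q-1. (\<Sum>i<q-1. T (Suc i) (Suc j) 0) * y^(Suc j))"
      by (simp add: sum_distrib_right) (rule sum.swap)
    also have "\<dots> = (\<Sum>j<q-1. (if j = 0 then y else 0))"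
    proof (rule sum.cong[OF refl])
      fix j assume "j \<in> {..<q-1}"
      then have "Suc j < q" by auto
      then show "(\<Sum>i<q-1. T (Suc i) (Suc j) 0) * y^(Suc j) = (if j = 0 then y else 0)"
        using S1[of "Suc j"] by simp
    qed
    also have "\<dots> = y" using q2 by simp
    also have "(\<Sum>i<q-1. \<Sum>j<q-1. \<Sum>k<q-1. T (Suc i) (Suc j) (Suc k) * y^(Suc j) * z^(Suc k))
       = y * z * (\<Sum>i\<le>q-2. \<Sum>j\<le>q-2. \<Sum>k\<le>q-2. b i j k * 1 ^ i * y ^ j * z ^ k)"
      unfolding AT b_def by (simp add: sum_distrib_left mult_ac)
    finally show ?thesis by (simp add: add_ac)
  qed
  show ?thesis using C1 C2 C3 by blast
qed

end
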